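(* Fix $c_5\in(0,c_4)$ and put $c_6=c_4-c_5$. There is $c_7>0$ such that for all $\beta$ large enough, $$\sup_{E\Subset\Lambda}\ \sup_{o\in E}\ \sum_{J\in\mathcal J(E):\,o\in\mathrm{supp}\,J}e^{-\beta c_6\,\mathrm{size}\,J}\le e^{-\beta c_7}.$$ Furthermore, with $K(J)=e^{-\beta c_4\,\mathrm{size}\,J}$ and $a(J)=\beta c_5\eta|\mathrm{supp}\,J|$ for $J\in\mathcal J(E)$: for every finite $\tilde{\mathcal J}\subseteq\mathcal J(E)$, $$\sup_{E\Subset\Lambda}\sup_{o\in E}\sum_{J\in\tilde{\mathcal J}:\,o\in\mathrm{supp}\,J}K(J)e^{a(J)}\le e^{-\beta c_7},$$ and, for all $\beta$ large enough (uniformly in $E$ and $\tilde{\mathcal J}$), for every $I\in\tilde{\mathcal J}$, $$\sum_{J\in\tilde{\mathcal J}}K(J)\,1_{\{I\sim J\}}\,e^{a(J)}\le a(I).$$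
   Context: $\Gamma\subset\mathbb{R}^3$ is a rank-3 lattice, $\eta=\min\{|\gamma|:\gamma\in\Gamma\setminus\{0\}\}$. $(V_\Lambda,\Lambda)$ is a periodic lattice graph in $\mathbb{R}^3$ of bounded degree; edges carry counting directions and $s_{ve}\in\{1,-1,0\}$ is the signed incidence ($1$ if $v$ is the head of $e$, $-1$ if the tail, $0$ otherwise). For finite $E\subset\Lambda$ (written $E\Subset\Lambda$) with endpoint set $V$, $\mathcal I(E)=\{I\in\Gamma^E:\sum_es_{ve}I_e=0\ \forall v\in V\}$, $\|I\|_1=\sum_e|I_e|$, $\mathrm{supp}\,I=\{e:I_e\neq0\}$. A set of edges is connected if the graph formed by these edges (with their endpoints) is connected. $\mathcal J(E)=\{I\in\mathcal I(E):\mathrm{supp}\,I\text{ nonempty and connected}\}$. Two elements $I,J$ are incompatible, $I\sim J$, if some edge of $\mathrm{supp}\,I$ shares a vertex with some edge of $\mathrm{supp}\,J$ (so $I\sim I$). $\mathrm{size}\,I=\|I\|_1+\mathrm{diam}\,\mathrm{supp}\,I$, where diam is the diameter in the graph distance of the mesoscopic graph (maximal graph distance between endpoints of edges in the set). Constants: $c>0$ is the constant in the lower bound $H_{\mathrm{disl}}(I)\ge c\|I\|_1$, $c_3=1+\eta^{-1}$, $c_4=c/(2c_3)$. "$\beta$ large enough" means $\beta>\beta_0$ with $\beta_0$ depending only on $\Gamma$, the mesoscopic graph, $c$ (and $c_5$). *)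

theory Defs
  imports "HOL-Analysis.Analysis"
begin

type_synonym pt = "real^3"
type_synonym edge = "pt \<times> pt"   (* (tail, head): the counting direction *)

definition rank3_lattice :: "pt set \<Rightarrow> bool" where
  "rank3_lattice L \<longleftrightarrow> (\<exists>b1 b2 b3. card {b1, b2, b3} = 3 \<and> independent {b1, b2, b3} \<and>
      L = {of_int i *\<^sub>R b1 + of_int j *\<^sub>R b2 + of_int k *\<^sub>R b3 | i j k. True})"

definition eta :: "pt set \<Rightarrow> real" where
  "eta \<Gamma> = Inf (norm ` (\<Gamma> - {0}))"

definition periodic_bdd_graph :: "edge set \<Rightarrow> bool" where
  "periodic_bdd_graph \<Lambda> \<longleftrightarrow>
     (\<forall>e\<in>\<Lambda>. fst e \<noteq> snd e) \<and>
     (\<exists>L F. rank3_lattice L \<and> finite F \<and> F \<subseteq> \<Lambda> \<and>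
        \<Lambda> = {(u + l, v + l) | u v l. (u, v) \<in> F \<and> l \<in> L}) \<and>
     (\<exists>D::nat. \<forall>v. finite {e\<in>\<Lambda>. fst e = v \<or> snd e = v} \<and>
                    card {e\<in>\<Lambda>. fst e = v \<or> snd e = v} \<le> D)"

definition verts :: "edge set \<Rightarrow> pt set" where
  "verts E = fst ` E \<union> snd ` E"

definition sinc :: "pt \<Rightarrow> edge \<Rightarrow> real" where
  "sinc v e = (if v = snd e then 1 else if v = fst e then -1 else 0)"

definition currents :: "pt set \<Rightarrow> edge set \<Rightarrow> (edge \<Rightarrow> pt) set" where
  "currents \<Gamma> E = {I. (\<forall>e\<in>E. I e \<in> \<Gamma>) \<and> (\<forall>e. e \<notin> E \<longrightarrow> I e = 0) \<and>
      (\<forall>v\<in>verts E. (\<Sum>e\<in>E. sinc v e *\<^sub>R I e) = 0)}"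

definition norm1 :: "edge set \<Rightarrow> (edge \<Rightarrow> pt) \<Rightarrow> real" where
  "norm1 E I = (\<Sum>e\<in>E. norm (I e))"

definition supp :: "edge set \<Rightarrow> (edge \<Rightarrow> pt) \<Rightarrow> edge set" where
  "supp E I = {e\<in>E. I e \<noteq> 0}"

definition share_vertex :: "edge \<Rightarrow> edge \<Rightarrow> bool" where
  "share_vertex e e' \<longleftrightarrow> verts {e} \<inter> verts {e'} \<noteq> {}"

definition edges_connected :: "edge set \<Rightarrow> bool" where
  "edges_connected F \<longleftrightarrow>
     (\<forall>e\<in>F. \<forall>e'\<in>F. (e, e') \<in> {(x, y). x \<in> F \<and> y \<in> F \<and> share_vertex x y}\<^sup>*)"

definition Jset :: "pt set \<Rightarrow> edge set \<Rightarrow> (edge \<Rightarrow> pt) set" where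
  "Jset \<Gamma> E = {I \<in> currents \<Gamma> E. supp E I \<noteq> {} \<and> edges_connected (supp E I)}"

definition incompat :: "edge set \<Rightarrow> (edge \<Rightarrow> pt) \<Rightarrow> (edge \<Rightarrow> pt) \<Rightarrow> bool" where
  "incompat E I J \<longleftrightarrow> (\<exists>e\<in>supp E I. \<exists>e'\<in>supp E J. share_vertex e e')"

definition gdist :: "edge set \<Rightarrow> pt \<Rightarrow> pt \<Rightarrow> nat" where
  "gdist \<Lambda> u v = (LEAST n. (u, v) \<in> (\<Lambda> \<union> \<Lambda>\<inverse>) ^^ n)"

definition gdiam :: "edge set \<Rightarrow> edge set \<Rightarrow> nat" where
  "gdiam \<Lambda> F = Max {gdist \<Lambda> u v | u v. u \<in> verts F \<and> v \<in> verts F}"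

definition size :: "edge set \<Rightarrow> edge set \<Rightarrow> (edge \<Rightarrow> pt) \<Rightarrow> real" where
  "size \<Lambda> E I = norm1 E I + real (gdiam \<Lambda> (supp E I))"

end

theory Submission
  imports Defs
begin

definition adjF :: "edge set \<Rightarrow> (edge \<times> edge) set" where
  "adjF F = {(x, y). x \<in> F \<and> y \<in> F \<and> share_vertex x y}"

lemma share_vertex_refl: "share_vertex e e"
  by (auto simp: share_vertex_def verts_def)

lemma share_vertex_sym: "share_vertex e e' \<Longrightarrow> share_vertex e' e"
  by (auto simp: share_vertex_def)

lemma ec_iff: "edges_connected F \<longleftrightarrow> (\<forall>e\<in>F. \<forall>e'\<in>F. (e, e') \<in> (adjF F)\<^sup>*)"
  by (simp add: edges_connected_def adjF_def)

lemma sym_adjF: "sym (adjF F)"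
  by (auto simp: sym_def adjF_def intro: share_vertex_sym)

lemma remove_far:
  assumes fin: "finite F" and conn: "edges_connected F" and xF: "x \<in> F" and c2: "card F \<ge> 2"
  shows "\<exists>y\<in>F. y \<noteq> x \<and> edges_connected (F - {y}) \<and> (\<exists>z\<in>F-{y}. share_vertex z y)"
proof -
  define R where "R = adjF F"
  define d where "d z = (LEAST n. (x, z) \<in> R ^^ n)" for z
  have dz: "(x, z) \<in> R ^^ (d z)" if "z \<in> F" for z
  proof -
    have "(x, z) \<in> R\<^sup>*" using conn xF that by (simp add: ec_iff R_def)
    then obtain n where "(x, z) \<in> R ^^ n" using rtrancl_power by blast
    then show ?thesis unfolding d_def by (rule LeastI)
  qed
  have dmin: "d z \<le> n" if "(x, z) \<in> R ^^ n" for z n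
    unfolding d_def using that by (rule Least_le)
  have Fne: "F \<noteq> {}" using xF by auto
  have "Max (d ` F) \<in> d ` F" using fin Fne by simp
  then obtain y where yF: "y \<in> F" and ymax: "d y = Max (d ` F)" by auto
  have ymax': "d z \<le> d y" if "z \<in> F" for z using ymax fin that by simp
  have dy0: "d y > 0"
  proof (rule ccontr)
    assume "\<not> d y > 0"
    then have "\<forall>z\<in>F. d z = 0" using ymax' by fastforce
    then have "\<forall>z\<in>F. z = x" using dz by fastforce
    then have "F \<subseteq> {x}" by auto
    then have "card F \<le> 1" using card_mono[of "{x}" F] by simp
    then show False using c2 by simp
  qed
  have dx: "d x = 0" using dmin[of x 0] by simp
  have yx: "y \<noteq> x" using dx dy0 by auto
  define R' where "R' = adjF (F - {y})"
  have reach: "(x, z) \<in> R'\<^sup>*" if zF: "z \<in> F - {y}" for z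
  proof -
    obtain f where f0: "f 0 = x" and fz: "f (d z) = z" and fs: "\<forall>i<d z. (f i, f (Suc i)) \<in> R"
      using dz[of z] zF by (auto simp: relpow_fun_conv)
    have fny: "f i \<noteq> y" if "i \<le> d z" for i
    proof
      assume fi: "f i = y"
      show False
      proof (cases "i = d z")
        case True then show False using fz fi zF by auto
      next
        case False
        then have il: "i < d z" using that by simp
        have "(x, y) \<in> R ^^ i" unfolding relpow_fun_conv
          using f0 fi fs il by (intro exI[of _ f]) auto
        then have "d y \<le> i" by (rule dmin)
        then show False using il ymax'[of z] zF by auto
      qed
    qed
    have "\<forall>i<d z. (f i, f (Suc i)) \<in> R'"
    proof (intro allI impI)
      fix i assume "i < d z"
      then show "(f i, f (Suc i)) \<in> R'" using fs fny[of i] fny[of "Suc i"]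
        by (auto simp: R_def R'_def adjF_def)
    qed
    then have "(x, z) \<in> R' ^^ (d z)" unfolding relpow_fun_conv using f0 fz by blast
    then show ?thesis by (rule relpow_imp_rtrancl)
  qed
  have symR': "sym (R'\<^sup>*)" by (rule sym_rtrancl) (simp add: R'_def sym_adjF)
  have conn': "edges_connected (F - {y})"
    unfolding ec_iff R'_def[symmetric]
  proof (intro ballI)
    fix e e' assume e: "e \<in> F - {y}" and e': "e' \<in> F - {y}"
    have "(e, x) \<in> R'\<^sup>*" using reach[OF e] symR' by (meson symD)
    then show "(e, e') \<in> R'\<^sup>*" using reach[OF e'] by (rule rtrancl_trans)
  qed
  obtain f where f0: "f 0 = x" and fy: "f (d y) = y" and fs: "\<forall>i<d y. (f i, f (Suc i)) \<in> R"
    using dz[OF yF] by (auto simp: relpow_fun_conv)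
  define k where "k = d y - 1"
  have kS: "Suc k = d y" using dy0 k_def by simp
  have zR: "(f k, y) \<in> R" using fs kS fy by (metis lessI)
  have "(x, f k) \<in> R ^^ k" unfolding relpow_fun_conv
    using f0 fs kS by (intro exI[of _ f]) auto
  then have dzk: "d (f k) \<le> k" by (rule dmin)
  have zny: "f k \<noteq> y" using dzk kS by auto
  show ?thesis
    using yF yx conn' zR zny by (intro bexI[of _ y]) (auto simp: R_def adjF_def intro!: bexI[of _ "f k"])
qed

lemma succ_insert:
  "successively P (u @ z # v) \<Longrightarrow> P z y \<Longrightarrow> P y z \<Longrightarrow> successively P (u @ z # y # z # v)"
  by (cases v) (auto simp: successively_append_iff)

lemma cover_walk:
  assumes "finite F" "edges_connected F" "x \<in> F"
  shows "\<exists>w. w \<noteq> [] \<and> hd w = x \<and> set w = F \<and> successively share_vertex w \<and> length w = 2 * card F - 1"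
  using assms
proof (induction "card F" arbitrary: F rule: less_induct)
  case less
  show ?case
  proof (cases "card F \<ge> 2")
    case False
    have "card F \<noteq> 0" using less.prems by auto
    then have "card F = 1" using False by simp
    then have "F = {x}" using less.prems by (metis card_1_singletonE singletonD)
    then show ?thesis by (intro exI[of _ "[x]"]) auto
  next
    case True
    obtain y where yF: "y \<in> F" and yx: "y \<noteq> x" and c': "edges_connected (F - {y})"
      and z: "\<exists>z\<in>F-{y}. share_vertex z y"
      using remove_far[OF less.prems(1,2,3) True] by blast
    obtain z where zF: "z \<in> F - {y}" and zy: "share_vertex z y" using z by blast
    have cl: "card (F - {y}) < card F" using yF less.prems(1) by (rule card_Diff1_less[rotated])
    obtain w where w: "w \<noteq> []" "hd w = x" "set w = F - {y}" "successively share_vertex w"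
      "length w = 2 * card (F - {y}) - 1"
      using less.hyps[OF cl] less.prems c' yx by auto
    obtain u v where uv: "w = u @ z # v" using zF w(3) split_list by metis
    define w' where "w' = u @ z # y # z # v"
    have "successively share_vertex w'" unfolding w'_def
      using succ_insert[of share_vertex u z v y] w(4) uv zy share_vertex_sym by auto
    moreover have "hd w' = x" using w(2) uv unfolding w'_def by (cases u) auto
    moreover have "set w' = F" using w(3) uv yF zF unfolding w'_def by auto
    moreover have "length w' = 2 * card F - 1"
      using w(5) uv unfolding w'_def using yF less.prems(1) True by (simp add: card_Diff_singleton)
    moreover have "w' \<noteq> []" unfolding w'_def by simp
    ultimately show ?thesis by blast
  qed
qed

definition Nb :: "edge set \<Rightarrow> edge \<Rightarrow> edge set" where
  "Nb L e = {e'\<in>L. share_vertex e e'}"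

fun Wk :: "edge set \<Rightarrow> edge \<Rightarrow> nat \<Rightarrow> edge list set" where
  "Wk L o0 0 = {[o0]}"
| "Wk L o0 (Suc m) = (\<lambda>(w, e). w @ [e]) ` (SIGMA w:Wk L o0 m. Nb L (last w))"

lemma Wk_card:
  assumes nb: "\<And>e. finite (Nb L e) \<and> card (Nb L e) \<le> M"
  shows "finite (Wk L o0 m) \<and> card (Wk L o0 m) \<le> M ^ m"
proof (induction m)
  case 0 then show ?case by simp
next
  case (Suc m)
  have fS: "finite (SIGMA w:Wk L o0 m. Nb L (last w))" using Suc nb by auto
  have "card (Wk L o0 (Suc m)) \<le> card (SIGMA w:Wk L o0 m. Nb L (last w))"
    by (simp add: card_image_le fS)
  also have "\<dots> = (\<Sum>w\<in>Wk L o0 m. card (Nb L (last w)))" using Suc nb by (simp add: card_SigmaI)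
  also have "\<dots> \<le> (\<Sum>w\<in>Wk L o0 m. M)" by (rule sum_mono) (use nb in auto)
  also have "\<dots> \<le> M ^ m * M" using Suc by simp
  finally show ?case using fS by (simp add: mult.commute)
qed

lemma Wk_mem:
  "length w = Suc m \<Longrightarrow> hd w = o0 \<Longrightarrow> set w \<subseteq> L \<Longrightarrow> successively share_vertex w \<Longrightarrow> w \<in> Wk L o0 m"
proof (induction m arbitrary: w)
  case 0
  then show ?case by (cases w) auto
next
  case (Suc m)
  define u where "u = butlast w"
  have wne: "w \<noteq> []" using Suc.prems by auto
  have w: "w = u @ [last w]" using wne u_def by simp
  have une: "u \<noteq> []" using Suc.prems(1) u_def by (cases w) auto
  have "u \<in> Wk L o0 m"
  proof (rule Suc.IH)
    show "length u = Suc m" using Suc.prems(1) u_def by simp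
    show "hd u = o0" using Suc.prems(2) w une by (metis hd_append)
    show "set u \<subseteq> L" using Suc.prems(3) u_def by (meson in_set_butlastD subset_iff)
    show "successively share_vertex u" using Suc.prems(4) w by (metis successively_append_iff)
  qed
  moreover have "last w \<in> Nb L (last u)"
    using Suc.prems(3,4) w une wne unfolding Nb_def
    by (metis (no_types, lifting) last_in_set mem_Collect_eq subsetD successively_append_iff list.sel(1) not_Cons_self)
  ultimately show ?case using w by (auto intro!: image_eqI[of _ _ "(u, last w)"])
qed

lemma animal:
  fixes M :: nat and Q :: real
  assumes nb: "\<And>e. finite (Nb L e) \<and> card (Nb L e) \<le> M"
    and M1: "M \<ge> 1" and Q0: "Q \<ge> 0" and MQ: "real M ^ 2 * Q \<le> 1/2"
    and fSS: "finite SS"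
    and SS: "\<And>S. S \<in> SS \<Longrightarrow> finite S \<and> S \<subseteq> L \<and> o0 \<in> S \<and> edges_connected S"
  shows "(\<Sum>S\<in>SS. Q ^ card S) \<le> 2 * Q"
proof -
  define P where "P S w \<longleftrightarrow> w \<noteq> [] \<and> hd w = o0 \<and> set w = S \<and> successively share_vertex w
       \<and> length w = 2 * card S - 1" for S w
  define cw where "cw S = (SOME w. P S w)" for S
  have cwP: "P S (cw S)" if "S \<in> SS" for S
  proof -
    have h: "finite S" "edges_connected S" "o0 \<in> S" using SS[OF that] by auto
    have "\<exists>w. P S w" unfolding P_def by (rule cover_walk[OF h])
    then show ?thesis unfolding cw_def by (rule someI_ex)
  qed
  have cnt: "card {S\<in>SS. card S = n} \<le> M ^ (2 * n - 2)" if n1: "n \<ge> 1" for n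
  proof -
    have "inj_on cw {S\<in>SS. card S = n}"
      by (rule inj_onI) (metis (mono_tags, lifting) P_def cwP mem_Collect_eq)
    moreover have "cw ` {S\<in>SS. card S = n} \<subseteq> Wk L o0 (2 * n - 2)"
    proof
      fix w assume "w \<in> cw ` {S\<in>SS. card S = n}"
      then obtain S where S: "S \<in> SS" "card S = n" "w = cw S" by auto
      have "P S w" using cwP S by simp
      then show "w \<in> Wk L o0 (2 * n - 2)"
        using n1 S SS[OF S(1)] unfolding P_def by (intro Wk_mem) auto
    qed
    moreover have "finite (Wk L o0 (2 * n - 2))" using Wk_card[OF nb] by blast
    ultimately have "card {S\<in>SS. card S = n} \<le> card (Wk L o0 (2 * n - 2))"
      by (rule card_inj_on_le)
    also have "\<dots> \<le> M ^ (2 * n - 2)" using Wk_card[OF nb] by blast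
    finally show ?thesis .
  qed
  have pos: "n \<ge> 1" if "n \<in> card ` SS" for n
    using that SS by (auto simp: card_gt_0_iff Suc_le_eq) (metis empty_iff)
  have "(\<Sum>S\<in>SS. Q ^ card S) = (\<Sum>n\<in>card ` SS. \<Sum>S\<in>{S\<in>SS. card S = n}. Q ^ card S)"
    by (rule sum.group[symmetric]) (use fSS in auto)
  also have "\<dots> = (\<Sum>n\<in>card ` SS. real (card {S\<in>SS. card S = n}) * Q ^ n)"
    by (rule sum.cong) auto
  also have "\<dots> \<le> (\<Sum>n\<in>card ` SS. Q * (1/2) ^ (n - 1))"
  proof (rule sum_mono)
    fix n assume n: "n \<in> card ` SS"
    then have n1: "n \<ge> 1" by (rule pos)
    have "real (card {S\<in>SS. card S = n}) * Q ^ n \<le> real M ^ (2 * n - 2) * Q ^ n"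
      using cnt[OF n1] Q0 by (intro mult_right_mono) (auto simp flip: of_nat_power)
    also have "\<dots> = Q * (real M ^ 2 * Q) ^ (n - 1)"
      using n1 by (cases n) (auto simp: power_mult power_mult_distrib)
    also have "\<dots> \<le> Q * (1/2) ^ (n - 1)"
      using MQ Q0 by (intro mult_left_mono power_mono) auto
    finally show "real (card {S\<in>SS. card S = n}) * Q ^ n \<le> Q * (1/2) ^ (n - 1)" .
  qed
  also have "\<dots> = Q * (\<Sum>n\<in>card ` SS. (1/2::real) ^ (n - 1))" by (simp add: sum_distrib_left)
  also have "(\<Sum>n\<in>card ` SS. (1/2::real) ^ (n - 1)) = (\<Sum>m\<in>(\<lambda>n. n - 1) ` card ` SS. (1/2::real) ^ m)"
  proof (rule sum.reindex[symmetric, unfolded comp_def])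
    show "inj_on (\<lambda>n. n - 1) (card ` SS)" using pos by (intro inj_onI) (metis One_nat_def Suc_pred less_eq_Suc_le)
  qed
  also have "\<dots> \<le> (\<Sum>m. (1/2::real) ^ m)"
    by (rule sum_le_suminf) (use fSS in auto)
  also have "\<dots> = 2" using suminf_geometric[of "1/2::real"] by simp
  finally show ?thesis using Q0 by (simp add: mult.commute mult_right_mono)
qed

lemma geo_int_bound:
  fixes r :: real
  assumes r0: "0 \<le> r" and r1: "r < 1" and fA: "finite (A :: int set)"
  shows "(\<Sum>i\<in>A. r ^ nat \<bar>i\<bar>) \<le> 2 / (1 - r)"
proof -
  define N where "N = (\<lambda>i. nat \<bar>i\<bar>) ` A"
  have fN: "finite N" using fA N_def by simp
  have sub: "A \<subseteq> int ` N \<union> uminus ` int ` N" unfolding N_def by (force simp: image_iff)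
  have "(\<Sum>i\<in>A. r ^ nat \<bar>i\<bar>) \<le> (\<Sum>i\<in>int ` N \<union> uminus ` int ` N. r ^ nat \<bar>i\<bar>)"
    by (rule sum_mono2) (use fN sub r0 in auto)
  also have "\<dots> \<le> (\<Sum>i\<in>int ` N. r ^ nat \<bar>i\<bar>) + (\<Sum>i\<in>uminus ` int ` N. r ^ nat \<bar>i\<bar>)"
  proof -
    have "(\<Sum>i\<in>int ` N \<union> uminus ` int ` N. r ^ nat \<bar>i\<bar>) = (\<Sum>i\<in>int ` N. r ^ nat \<bar>i\<bar>) + (\<Sum>i\<in>uminus ` int ` N. r ^ nat \<bar>i\<bar>) - (\<Sum>i\<in>int ` N \<inter> uminus ` int ` N. r ^ nat \<bar>i\<bar>)"
      by (rule sum_Un) (use fN in auto)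
    moreover have "0 \<le> (\<Sum>i\<in>int ` N \<inter> uminus ` int ` N. r ^ nat \<bar>i\<bar>)"
      by (rule sum_nonneg) (use r0 in auto)
    ultimately show ?thesis by linarith
  qed
  also have "(\<Sum>i\<in>int ` N. r ^ nat \<bar>i\<bar>) = (\<Sum>n\<in>N. r ^ n)"
    using sum.reindex[of int N "\<lambda>i. r ^ nat \<bar>i\<bar>"] by (simp add: comp_def inj_on_def)
  also have "(\<Sum>i\<in>uminus ` int ` N. r ^ nat \<bar>i\<bar>) = (\<Sum>n\<in>N. r ^ n)"
    using sum.reindex[of "\<lambda>n. - int n" N "\<lambda>i. r ^ nat \<bar>i\<bar>"] by (simp add: comp_def inj_on_def image_image)
  also have "(\<Sum>n\<in>N. r ^ n) \<le> (\<Sum>n. r ^ n)"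
    by (rule sum_le_suminf) (use fN r0 r1 in auto)
  also have "(\<Sum>n. r ^ n) = 1 / (1 - r)" using suminf_geometric[of r] r0 r1 by simp
  finally show ?thesis by simp
qed

lemma triple_bound:
  fixes r :: real
  assumes r0: "0 \<le> r" and r1: "r < 1" and fU: "finite (U :: (int \<times> int \<times> int) set)"
  shows "(\<Sum>(i,j,k)\<in>U. r ^ nat \<bar>i\<bar> * r ^ nat \<bar>j\<bar> * r ^ nat \<bar>k\<bar>) \<le> (2 / (1 - r)) ^ 3"
proof -
  define A where "A = fst ` U \<union> fst ` snd ` U \<union> snd ` snd ` U"
  have fA: "finite A" using fU A_def by simp
  have sub: "U \<subseteq> A \<times> A \<times> A" unfolding A_def by (force simp: image_iff)
  define g where "g i = r ^ nat \<bar>i\<bar>" for i :: int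
  have "(\<Sum>(i,j,k)\<in>U. r ^ nat \<bar>i\<bar> * r ^ nat \<bar>j\<bar> * r ^ nat \<bar>k\<bar>)
      \<le> (\<Sum>(i,j,k)\<in>A \<times> A \<times> A. g i * g j * g k)"
    unfolding g_def by (rule sum_mono2) (use fA sub r0 in auto)
  also have "\<dots> = (\<Sum>i\<in>A. g i * (\<Sum>j\<in>A. g j * (\<Sum>k\<in>A. g k)))"
    by (simp add: sum.cartesian_product[symmetric] sum_distrib_left mult.assoc)
  also have "\<dots> = sum g A * (sum g A * sum g A)"
    by (simp add: sum_distrib_right)
  also have "\<dots> \<le> (2 / (1 - r)) * ((2 / (1 - r)) * (2 / (1 - r)))"
  proof -
    have s0: "0 \<le> sum g A" unfolding g_def using r0 by (auto intro: sum_nonneg)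
    have sb: "sum g A \<le> 2 / (1 - r)" unfolding g_def by (rule geo_int_bound[OF r0 r1 fA])
    show ?thesis using s0 sb r1 by (intro mult_mono) auto
  qed
  finally show ?thesis by (simp add: power3_eq_cube mult.assoc)
qed

lemma lattice_bounds:
  assumes "rank3_lattice \<Gamma>"
  obtains \<delta> S0 where "\<delta> > 0" "S0 \<ge> 0" "\<And>\<gamma>. \<gamma> \<in> \<Gamma> - {0} \<Longrightarrow> norm \<gamma> \<ge> \<delta>" "\<Gamma> - {0} \<noteq> {}"
    "\<And>b T. b \<ge> 1 \<Longrightarrow> finite T \<Longrightarrow> T \<subseteq> \<Gamma> - {0} \<Longrightarrow>
        (\<Sum>\<gamma>\<in>T. exp (- b * norm \<gamma>)) \<le> exp (- (b - 1) * \<delta>) * S0"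
proof -
  obtain b1 b2 b3 where c3: "card {b1, b2, b3} = 3" and ind: "independent {b1, b2, b3}"
    and G: "\<Gamma> = {of_int i *\<^sub>R b1 + of_int j *\<^sub>R b2 + of_int k *\<^sub>R b3 | i j k. True}"
    using assms unfolding rank3_lattice_def by blast
  have d12: "b1 \<noteq> b2" and d13: "b1 \<noteq> b3" and d23: "b2 \<noteq> b3"
    using c3 by (auto simp: card_insert_if split: if_splits)
  define L where "L v = v$1 *\<^sub>R b1 + v$2 *\<^sub>R b2 + v$3 *\<^sub>R b3" for v :: "real^3"
  have linL: "linear L" unfolding L_def
    by (intro linearI) (auto simp: algebra_simps scaleR_add_left)
  have L0: "x = 0 \<and> y = 0 \<and> z = 0" if h: "x *\<^sub>R b1 + y *\<^sub>R b2 + z *\<^sub>R b3 = 0" for x y z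
  proof -
    define c where "c u = (if u = b1 then x else if u = b2 then y else z)" for u
    have "(\<Sum>u\<in>{b1, b2, b3}. c u *\<^sub>R u) = x *\<^sub>R b1 + y *\<^sub>R b2 + z *\<^sub>R b3"
      using d12 d13 d23 by (simp add: c_def)
    then have "\<forall>u\<in>{b1,b2,b3}. c u = 0" using ind h unfolding independent_explicit by auto
    then show ?thesis using d12 d13 d23 by (auto simp: c_def)
  qed
  have Lz: "v = 0" if "L v = 0" for v
  proof -
    have "v$1 = 0 \<and> v$2 = 0 \<and> v$3 = 0" using L0 that unfolding L_def by blast
    then show ?thesis by (simp add: vec_eq_iff forall_3)
  qed
  have injL: "inj L" using linear_inj_iff_eq_0[OF linL] Lz by blast
  obtain B where B0: "B > 0" and BL: "\<And>v. B * norm v \<le> norm (L v)"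
    using linear_inj_bounded_below_pos[OF linL injL] by blast
  define \<delta> where "\<delta> = B / 3"
  have dpos: "\<delta> > 0" using B0 \<delta>_def by simp
  have key: "\<delta> * (\<bar>x\<bar> + \<bar>y\<bar> + \<bar>z\<bar>) \<le> norm (x *\<^sub>R b1 + y *\<^sub>R b2 + z *\<^sub>R b3)" for x y z
  proof -
    define v :: "real^3" where "v = vector [x, y, z]"
    have Lv: "L v = x *\<^sub>R b1 + y *\<^sub>R b2 + z *\<^sub>R b3" by (simp add: L_def v_def vector_3)
    have "\<bar>x\<bar> \<le> norm v" "\<bar>y\<bar> \<le> norm v" "\<bar>z\<bar> \<le> norm v"
      using component_le_norm_cart[of v 1] component_le_norm_cart[of v 2] component_le_norm_cart[of v 3]
      by (auto simp: v_def vector_3)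
    then have "\<bar>x\<bar> + \<bar>y\<bar> + \<bar>z\<bar> \<le> 3 * norm v" by simp
    then have "\<delta> * (\<bar>x\<bar> + \<bar>y\<bar> + \<bar>z\<bar>) \<le> \<delta> * (3 * norm v)" using dpos by (intro mult_left_mono) auto
    also have "\<dots> = B * norm v" by (simp add: \<delta>_def)
    finally show ?thesis using BL[of v] Lv by simp
  qed
  define h where "h = (\<lambda>(i::int, j::int, k::int). of_int i *\<^sub>R b1 + of_int j *\<^sub>R b2 + of_int k *\<^sub>R b3)"
  have Gh: "\<Gamma> = range h"
  proof (intro set_eqI iffI)
    fix x assume "x \<in> \<Gamma>"
    then obtain i j k where "x = of_int i *\<^sub>R b1 + of_int j *\<^sub>R b2 + of_int k *\<^sub>R b3" using G by auto
    then show "x \<in> range h" by (intro image_eqI[of _ _ "(i,j,k)"]) (auto simp: h_def)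
  next
    fix x assume "x \<in> range h" then show "x \<in> \<Gamma>" using G by (auto simp: h_def)
  qed
  define s where "s = (\<lambda>(i::int, j::int, k::int). nat \<bar>i\<bar> + nat \<bar>j\<bar> + nat \<bar>k\<bar>)"
  have hs: "\<delta> * real (s u) \<le> norm (h u)" for u
    using key[of "of_int (fst u)" "of_int (fst (snd u))" "of_int (snd (snd u))"]
    by (cases u) (auto simp: h_def s_def)
  have s1: "s u \<ge> 1" if "h u \<noteq> 0" for u
  proof -
    obtain i j k where u: "u = (i, j, k)" by (cases u)
    show ?thesis using that unfolding u
      by (cases "i = 0"; cases "j = 0"; cases "k = 0") (auto simp: h_def s_def)
  qed
  have normd: "norm \<gamma> \<ge> \<delta>" if g: "\<gamma> \<in> \<Gamma> - {0}" for \<gamma>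
  proof -
    obtain u where u: "\<gamma> = h u" using g Gh by blast
    then have "s u \<ge> 1" using s1 g by auto
    then have "\<delta> \<le> \<delta> * real (s u)" using dpos by simp
    then show ?thesis using hs[of u] u by simp
  qed
  define \<rho> where "\<rho> = exp (- \<delta>)"
  have r0: "0 \<le> \<rho>" and r1: "\<rho> < 1" using dpos by (auto simp: \<rho>_def)
  define S0 where "S0 = (2 / (1 - \<rho>)) ^ 3"
  have S0pos: "S0 \<ge> 0" using r1 by (simp add: S0_def)
  have nonempty: "\<Gamma> - {0} \<noteq> {}"
  proof -
    have "b1 \<noteq> 0"
    proof
      assume "b1 = 0"
      then have "dependent {b1, b2, b3}" by (intro dependent_zero) simp
      then show False using ind by simp
    qed
    moreover have "b1 = h (1, 0, 0)" by (simp add: h_def)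
    ultimately show ?thesis using Gh by auto
  qed
  have sumb: "(\<Sum>\<gamma>\<in>T. exp (- b * norm \<gamma>)) \<le> exp (- (b - 1) * \<delta>) * S0"
    if b1: "b \<ge> 1" and fT: "finite T" and TG: "T \<subseteq> \<Gamma> - {0}" for b T
  proof -
    define ch where "ch \<gamma> = (SOME u. \<gamma> = h u)" for \<gamma>
    have chh: "h (ch \<gamma>) = \<gamma>" if "\<gamma> \<in> \<Gamma>" for \<gamma>
      unfolding ch_def using that Gh by (metis (mono_tags, lifting) imageE someI_ex)
    define U where "U = ch ` T"
    have fU: "finite U" using fT U_def by simp
    have TU: "T = h ` U" unfolding U_def using chh TG by (force simp: image_image)
    have "(\<Sum>\<gamma>\<in>T. exp (- b * norm \<gamma>)) \<le> (\<Sum>u\<in>U. exp (- b * norm (h u)))"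
      unfolding TU using sum_image_le[OF fU, of "\<lambda>\<gamma>. exp (- b * norm \<gamma>)" h] by (simp add: comp_def)
    also have "\<dots> \<le> (\<Sum>u\<in>U. exp (- (b - 1) * \<delta>) * \<rho> ^ s u)"
    proof (rule sum_mono)
      fix u assume uU: "u \<in> U"
      have hu0: "h u \<noteq> 0" using uU TU TG by auto
      have su: "real (s u) \<ge> 1" using s1[OF hu0] by simp
      have "(b - 1) * \<delta> + \<delta> * real (s u) \<le> b * (\<delta> * real (s u))"
      proof -
        have "(b - 1) * \<delta> \<le> (b - 1) * (\<delta> * real (s u))"
          using b1 dpos su by (intro mult_left_mono) (auto simp: mult_le_cancel_left1)
        then show ?thesis by (simp add: algebra_simps)
      qed
      also have "\<dots> \<le> b * norm (h u)" using hs[of u] b1 by (intro mult_left_mono) auto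
      finally have "- b * norm (h u) \<le> - (b - 1) * \<delta> + - \<delta> * real (s u)" by (simp add: algebra_simps)
      then have "exp (- b * norm (h u)) \<le> exp (- (b - 1) * \<delta> + - \<delta> * real (s u))" by simp
      also have "\<dots> = exp (- (b - 1) * \<delta>) * \<rho> ^ s u"
        by (simp add: exp_add[symmetric] \<rho>_def exp_of_nat2_mult[symmetric] algebra_simps)
      finally show "exp (- b * norm (h u)) \<le> exp (- (b - 1) * \<delta>) * \<rho> ^ s u" .
    qed
    also have "\<dots> = exp (- (b - 1) * \<delta>) * (\<Sum>u\<in>U. \<rho> ^ s u)" by (simp add: sum_distrib_left)
    also have "(\<Sum>u\<in>U. \<rho> ^ s u) = (\<Sum>(i,j,k)\<in>U. \<rho> ^ nat \<bar>i\<bar> * \<rho> ^ nat \<bar>j\<bar> * \<rho> ^ nat \<bar>k\<bar>)"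
      by (rule sum.cong) (auto simp: s_def power_add)
    also have "\<dots> \<le> S0" unfolding S0_def by (rule triple_bound[OF r0 r1 fU])
    finally show ?thesis by (simp add: mult_left_mono)
  qed
  show ?thesis using that[OF dpos S0pos normd nonempty sumb] by blast
qed

lemma nb_bound:
  assumes "periodic_bdd_graph \<Lambda>"
  obtains M :: nat where "M \<ge> 1" "\<And>e. finite (Nb \<Lambda> e) \<and> card (Nb \<Lambda> e) \<le> M"
proof -
  obtain D :: nat where D: "\<And>v. finite {e\<in>\<Lambda>. fst e = v \<or> snd e = v} \<and> card {e\<in>\<Lambda>. fst e = v \<or> snd e = v} \<le> D"
    using assms unfolding periodic_bdd_graph_def by blast
  define A where "A v = {e\<in>\<Lambda>. fst e = v \<or> snd e = v}" for v
  have sub: "Nb \<Lambda> e \<subseteq> A (fst e) \<union> A (snd e)" for e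
    by (auto simp: Nb_def A_def share_vertex_def verts_def)
  have "finite (Nb \<Lambda> e) \<and> card (Nb \<Lambda> e) \<le> 2 * D + 1" for e
  proof -
    have fU: "finite (A (fst e) \<union> A (snd e))" using D unfolding A_def by simp
    have "card (Nb \<Lambda> e) \<le> card (A (fst e) \<union> A (snd e))" using card_mono[OF fU sub] .
    also have "\<dots> \<le> card (A (fst e)) + card (A (snd e))" by (rule card_Un_le)
    also have "\<dots> \<le> 2 * D" using D[of "fst e"] D[of "snd e"] unfolding A_def by simp
    finally show ?thesis using fU sub finite_subset by fastforce
  qed
  then show ?thesis using that[of "2 * D + 1"] by simp
qed

lemma inner_bound:
  fixes g :: "pt \<Rightarrow> real" and S :: "edge set" and K :: "(edge \<Rightarrow> pt) set"
  assumes fS: "finite S" and fK: "finite K"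
    and KG: "\<And>J e. J \<in> K \<Longrightarrow> e \<in> S \<Longrightarrow> J e \<in> G"
    and inj: "inj_on (\<lambda>J. restrict J S) K"
    and g0: "\<And>x. g x \<ge> 0"
    and gQ: "\<And>T. finite T \<Longrightarrow> T \<subseteq> G \<Longrightarrow> sum g T \<le> Q"
  shows "(\<Sum>J\<in>K. \<Prod>e\<in>S. g (J e)) \<le> Q ^ card S"
proof -
  define P where "P = (\<lambda>J. restrict J S) ` K"
  have fP: "finite P" using fK P_def by simp
  have "(\<Sum>J\<in>K. \<Prod>e\<in>S. g (J e)) = (\<Sum>J\<in>K. \<Prod>e\<in>S. g (restrict J S e))"
    by (intro sum.cong prod.cong) auto
  also have "\<dots> = (\<Sum>p\<in>P. \<Prod>e\<in>S. g (p e))"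
    unfolding P_def by (subst sum.reindex[OF inj]) (simp add: comp_def)
  also have "\<dots> \<le> (\<Sum>p\<in>PiE S (\<lambda>e. (\<lambda>p. p e) ` P). \<Prod>e\<in>S. g (p e))"
  proof (rule sum_mono2)
    show "finite (PiE S (\<lambda>e. (\<lambda>p. p e) ` P))" using fS fP by (intro finite_PiE) auto
    show "P \<subseteq> PiE S (\<lambda>e. (\<lambda>p. p e) ` P)" unfolding P_def by (auto simp: PiE_iff)
    show "\<And>b. b \<in> PiE S (\<lambda>e. (\<lambda>p. p e) ` P) - P \<Longrightarrow> 0 \<le> (\<Prod>e\<in>S. g (b e))"
      using g0 by (auto intro: prod_nonneg)
  qed
  also have "\<dots> = (\<Prod>e\<in>S. \<Sum>y\<in>(\<lambda>p. p e) ` P. g y)"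
    by (rule prod_sum_PiE[symmetric]) (use fS fP in auto)
  also have "\<dots> \<le> (\<Prod>e\<in>S. Q)"
  proof (rule prod_mono)
    fix e assume eS: "e \<in> S"
    have "(\<lambda>p. p e) ` P \<subseteq> G" unfolding P_def image_image using KG[OF _ eS] eS
      by (simp add: image_subset_iff)
    then show "0 \<le> (\<Sum>y\<in>(\<lambda>p. p e) ` P. g y) \<and> (\<Sum>y\<in>(\<lambda>p. p e) ` P. g y) \<le> Q"
      using gQ fP g0 by (auto intro: sum_nonneg)
  qed
  also have "\<dots> = Q ^ card S" by simp
  finally show ?thesis .
qed

lemma supp_fin: "finite E \<Longrightarrow> finite (supp E J)"
  by (simp add: supp_def)

lemma norm1_supp: "norm1 E J = (\<Sum>e\<in>supp E J. norm (J e))" if "finite E"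
  unfolding norm1_def supp_def using that
  by (intro sum.mono_neutral_right) auto

lemma size_ge_norm1: "norm1 E J \<le> size \<Lambda> E J"
  by (simp add: size_def)

lemma core:
  fixes b Q :: real and M :: nat
  assumes gQ: "\<And>T. finite T \<Longrightarrow> T \<subseteq> \<Gamma> - {0} \<Longrightarrow> (\<Sum>\<gamma>\<in>T. exp (- b * norm \<gamma>)) \<le> Q"
    and nb: "\<And>e. finite (Nb \<Lambda> e) \<and> card (Nb \<Lambda> e) \<le> M"
    and M1: "M \<ge> 1" and MQ: "real M ^ 2 * Q \<le> 1/2" and b0: "b \<ge> 0"
    and fE: "finite E" and EL: "E \<subseteq> \<Lambda>"
    and fJ: "finite JJ" and sub: "JJ \<subseteq> {J \<in> Jset \<Gamma> E. oe \<in> supp E J}"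
  shows "(\<Sum>J\<in>JJ. exp (- b * size \<Lambda> E J)) \<le> 2 * Q"
proof -
  have Q0: "Q \<ge> 0" using gQ[of "{}"] by simp
  define g where "g \<gamma> = exp (- b * norm \<gamma>)" for \<gamma> :: pt
  have cur: "J \<in> currents \<Gamma> E" if "J \<in> JJ" for J using sub that by (auto simp: Jset_def)
  have step1: "exp (- b * size \<Lambda> E J) \<le> (\<Prod>e\<in>supp E J. g (J e))" for J
  proof -
    have "exp (- b * size \<Lambda> E J) \<le> exp (- b * norm1 E J)"
      using b0 size_ge_norm1[of E J \<Lambda>] by (simp add: mult_left_mono)
    also have "\<dots> = exp (\<Sum>e\<in>supp E J. - b * norm (J e))"
      by (simp add: norm1_supp[OF fE] sum_distrib_left)
    also have "\<dots> = (\<Prod>e\<in>supp E J. g (J e))" by (simp add: exp_sum[OF supp_fin[OF fE]] g_def)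
    finally show ?thesis .
  qed
  have "(\<Sum>J\<in>JJ. exp (- b * size \<Lambda> E J)) \<le> (\<Sum>J\<in>JJ. \<Prod>e\<in>supp E J. g (J e))"
    by (rule sum_mono) (rule step1)
  also have "\<dots> = (\<Sum>S\<in>supp E ` JJ. \<Sum>J\<in>{J\<in>JJ. supp E J = S}. \<Prod>e\<in>supp E J. g (J e))"
    by (rule sum.group[symmetric]) (use fJ in auto)
  also have "\<dots> = (\<Sum>S\<in>supp E ` JJ. \<Sum>J\<in>{J\<in>JJ. supp E J = S}. \<Prod>e\<in>S. g (J e))"
    by (intro sum.cong refl) auto
  also have "\<dots> \<le> (\<Sum>S\<in>supp E ` JJ. Q ^ card S)"
  proof (rule sum_mono)
    fix S assume SJ: "S \<in> supp E ` JJ"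
    show "(\<Sum>J\<in>{J\<in>JJ. supp E J = S}. \<Prod>e\<in>S. g (J e)) \<le> Q ^ card S"
    proof (rule inner_bound[where G = "\<Gamma> - {0}"])
      show "finite S" using SJ fE supp_fin by auto
      show "finite {J\<in>JJ. supp E J = S}" using fJ by simp
      show "J e \<in> \<Gamma> - {0}" if "J \<in> {J\<in>JJ. supp E J = S}" "e \<in> S" for J e
        using that cur[of J] by (auto simp: supp_def currents_def)
      show "inj_on (\<lambda>J. restrict J S) {J\<in>JJ. supp E J = S}"
      proof (rule inj_onI)
        fix J J' assume J: "J \<in> {J\<in>JJ. supp E J = S}" and J': "J' \<in> {J\<in>JJ. supp E J = S}"
          and eq: "restrict J S = restrict J' S"
        show "J = J'"
        proof
          fix e
          show "J e = J' e"
          proof (cases "e \<in> S")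
            case True then show ?thesis using eq by (metis restrict_apply')
          next
            case False
            have z: "H e = 0" if "H \<in> JJ" "supp E H = S" for H
            proof (cases "e \<in> E")
              case True then show ?thesis using that False by (auto simp: supp_def)
            next
              case False then show ?thesis using cur[OF that(1)] unfolding currents_def by blast
            qed
            show ?thesis using z[of J] z[of J'] J J' by simp
          qed
        qed
      qed
      show "\<And>x. 0 \<le> g x" by (simp add: g_def)
      show "\<And>T. finite T \<Longrightarrow> T \<subseteq> \<Gamma> - {0} \<Longrightarrow> sum g T \<le> Q" using gQ by (simp add: g_def)
    qed
  qed
  also have "\<dots> \<le> 2 * Q"
  proof (rule animal[OF nb M1 Q0 MQ])
    show "finite (supp E ` JJ)" using fJ by simp
    fix S assume "S \<in> supp E ` JJ"
    then obtain J where J: "J \<in> JJ" "S = supp E J" by auto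
    then show "finite S \<and> S \<subseteq> \<Lambda> \<and> oe \<in> S \<and> edges_connected S"
      using sub EL fE supp_fin[OF fE] by (auto simp: Jset_def supp_def)
  qed
  finally show ?thesis .
qed

theorem lemma3p3:
  fixes \<Gamma> :: "(real^3) set" and \<Lambda> :: "((real^3) \<times> (real^3)) set" and c c5 :: real
  defines "c3 \<equiv> 1 + 1 / eta \<Gamma>"
  defines "c4 \<equiv> c / (2 * c3)"
  defines "c6 \<equiv> c4 - c5"
  assumes lat: "rank3_lattice \<Gamma>"
      and graph: "periodic_bdd_graph \<Lambda>"
      and cpos: "c > 0"
      and c5: "0 < c5" "c5 < c4"
  shows "\<exists>c7 > 0. \<exists>\<beta>0. \<forall>\<beta> > \<beta>0.
    (\<forall>E oe. finite E \<longrightarrow> E \<subseteq> \<Lambda> \<longrightarrow> oe \<in> E \<longrightarrow>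
        (\<lambda>J. exp (- \<beta> * c6 * size \<Lambda> E J)) summable_on {J \<in> Jset \<Gamma> E. oe \<in> supp E J} \<and>
        (\<Sum>\<^sub>\<infinity>J\<in>{J \<in> Jset \<Gamma> E. oe \<in> supp E J}. exp (- \<beta> * c6 * size \<Lambda> E J))
           \<le> exp (- \<beta> * c7)) \<and>
    (\<forall>E Jt oe. finite E \<longrightarrow> E \<subseteq> \<Lambda> \<longrightarrow> finite Jt \<longrightarrow> Jt \<subseteq> Jset \<Gamma> E \<longrightarrow> oe \<in> E \<longrightarrow>
        (\<Sum>J\<in>{J\<in>Jt. oe \<in> supp E J}.
            exp (- \<beta> * c4 * size \<Lambda> E J) * exp (\<beta> * c5 * eta \<Gamma> * real (card (supp E J))))
          \<le> exp (- \<beta> * c7)) \<and>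
    (\<forall>E Jt I. finite E \<longrightarrow> E \<subseteq> \<Lambda> \<longrightarrow> finite Jt \<longrightarrow> Jt \<subseteq> Jset \<Gamma> E \<longrightarrow> I \<in> Jt \<longrightarrow>
        (\<Sum>J\<in>Jt. exp (- \<beta> * c4 * size \<Lambda> E J) * (if incompat E I J then 1 else 0)
                    * exp (\<beta> * c5 * eta \<Gamma> * real (card (supp E J))))
          \<le> \<beta> * c5 * eta \<Gamma> * real (card (supp E I)))"
proof -
  obtain \<delta> S0 where dpos: "\<delta> > 0" and S0pos: "S0 \<ge> 0"
    and normd: "\<And>\<gamma>. \<gamma> \<in> \<Gamma> - {0} \<Longrightarrow> norm \<gamma> \<ge> \<delta>" and ne: "\<Gamma> - {0} \<noteq> {}"
    and sumb: "\<And>b T. b \<ge> 1 \<Longrightarrow> finite T \<Longrightarrow> T \<subseteq> \<Gamma> - {0} \<Longrightarrow>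
        (\<Sum>\<gamma>\<in>T. exp (- b * norm \<gamma>)) \<le> exp (- (b - 1) * \<delta>) * S0"
    using lattice_bounds[OF lat] by blast
  obtain M :: nat where M1: "M \<ge> 1" and nb: "\<And>e. finite (Nb \<Lambda> e) \<and> card (Nb \<Lambda> e) \<le> M"
    using nb_bound[OF graph] by blast
  have eta_le: "eta \<Gamma> \<le> norm \<gamma>" if "\<gamma> \<in> \<Gamma> - {0}" for \<gamma>
    unfolding eta_def by (rule cInf_lower) (use that in \<open>auto intro: bdd_belowI[of _ 0]\<close>)
  have eta_ge: "\<delta> \<le> eta \<Gamma>"
    unfolding eta_def by (rule cInf_greatest) (use ne normd in auto)
  have etapos: "eta \<Gamma> > 0" using eta_ge dpos by simp
  have c6pos: "c6 > 0" using c5 by (simp add: c6_def)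
  have size_ge: "eta \<Gamma> * real (card (supp E J)) \<le> size \<Lambda> E J"
    if fE: "finite E" and J: "J \<in> Jset \<Gamma> E" for E J
  proof -
    have "eta \<Gamma> * real (card (supp E J)) = (\<Sum>e\<in>supp E J. eta \<Gamma>)" by simp
    also have "\<dots> \<le> (\<Sum>e\<in>supp E J. norm (J e))"
    proof (rule sum_mono)
      fix e assume "e \<in> supp E J"
      then have "J e \<in> \<Gamma> - {0}" using J by (auto simp: supp_def Jset_def currents_def)
      then show "eta \<Gamma> \<le> norm (J e)" by (rule eta_le)
    qed
    also have "\<dots> = norm1 E J" by (simp add: norm1_supp[OF fE])
    also have "\<dots> \<le> size \<Lambda> E J" by (rule size_ge_norm1)
    finally show ?thesis .
  qed
  define c7 where "c7 = c6 * \<delta> / 2"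
  have c7pos: "c7 > 0" using c6pos dpos by (simp add: c7_def)
  define K where "K = 2 * (real M ^ 2 + 1) * (S0 + 1) * exp \<delta>"
  have Kpos: "K > 0" unfolding K_def using S0pos
    by (intro mult_pos_pos) (auto intro: add_nonneg_pos)
  define \<beta>0 where "\<beta>0 = max (max (1 / c6) (ln K / c7)) (real M / (c5 * \<delta>))"
  have main: "(\<forall>E oe. finite E \<longrightarrow> E \<subseteq> \<Lambda> \<longrightarrow> oe \<in> E \<longrightarrow>
        (\<lambda>J. exp (- \<beta> * c6 * size \<Lambda> E J)) summable_on {J \<in> Jset \<Gamma> E. oe \<in> supp E J} \<and>
        (\<Sum>\<^sub>\<infinity>J\<in>{J \<in> Jset \<Gamma> E. oe \<in> supp E J}. exp (- \<beta> * c6 * size \<Lambda> E J))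
           \<le> exp (- \<beta> * c7)) \<and>
    (\<forall>E Jt oe. finite E \<longrightarrow> E \<subseteq> \<Lambda> \<longrightarrow> finite Jt \<longrightarrow> Jt \<subseteq> Jset \<Gamma> E \<longrightarrow> oe \<in> E \<longrightarrow>
        (\<Sum>J\<in>{J\<in>Jt. oe \<in> supp E J}.
            exp (- \<beta> * c4 * size \<Lambda> E J) * exp (\<beta> * c5 * eta \<Gamma> * real (card (supp E J))))
          \<le> exp (- \<beta> * c7)) \<and>
    (\<forall>E Jt I. finite E \<longrightarrow> E \<subseteq> \<Lambda> \<longrightarrow> finite Jt \<longrightarrow> Jt \<subseteq> Jset \<Gamma> E \<longrightarrow> I \<in> Jt \<longrightarrow>
        (\<Sum>J\<in>Jt. exp (- \<beta> * c4 * size \<Lambda> E J) * (if incompat E I J then 1 else 0)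
                    * exp (\<beta> * c5 * eta \<Gamma> * real (card (supp E J))))
          \<le> \<beta> * c5 * eta \<Gamma> * real (card (supp E I)))" if bb: "\<beta> > \<beta>0" for \<beta>
  proof -
    have b1: "\<beta> > 1 / c6" and b2: "\<beta> > ln K / c7" and b3: "\<beta> > real M / (c5 * \<delta>)"
      using bb by (auto simp: \<beta>0_def)
    define b where "b = \<beta> * c6"
    have bge: "b \<ge> 1" using b1 c6pos by (simp add: b_def field_simps)
    have bpos: "\<beta> > 0" using b1 c6pos by (smt (verit) divide_pos_pos)
    define x where "x = exp (- \<beta> * c7)"
    have x0: "x > 0" by (simp add: x_def)
    have lnK: "ln K < \<beta> * c7" using b2 c7pos by (simp add: field_simps)
    have Kx: "K * x \<le> 1"
    proof -
      have "K < exp (\<beta> * c7)" using lnK Kpos by (metis exp_less_cancel_iff exp_ln)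
      then show ?thesis unfolding x_def using exp_minus_inverse[of "\<beta> * c7"]
        by (simp add: exp_minus field_simps)
    qed
    have x1: "x \<le> 1" using bpos c7pos by (simp add: x_def)
    define Q where "Q = exp (- (b - 1) * \<delta>) * S0"
    have Qx: "Q = exp \<delta> * S0 * x * x"
    proof -
      have "- (b - 1) * \<delta> = \<delta> + (- \<beta> * c7) + (- \<beta> * c7)"
        by (simp add: b_def c7_def algebra_simps)
      then have "exp (- (b - 1) * \<delta>) = exp \<delta> * exp (- \<beta> * c7) * exp (- \<beta> * c7)"
        by (simp only: exp_add)
      then show ?thesis unfolding Q_def x_def by simp
    qed
    have K1: "2 * (exp \<delta> * S0) \<le> K" and K2: "2 * (real M ^ 2 * (exp \<delta> * S0)) \<le> K"
    proof -
      have e0: "exp \<delta> * S0 \<ge> 0" using S0pos by simp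
      have "exp \<delta> * S0 \<le> (real M ^ 2 + 1) * (S0 + 1) * exp \<delta>"
        using S0pos by (simp add: algebra_simps add_increasing)
      moreover have "K = 2 * ((real M ^ 2 + 1) * (S0 + 1) * exp \<delta>)" by (simp add: K_def mult.assoc)
      ultimately show "2 * (exp \<delta> * S0) \<le> K" by linarith
      have "real M ^ 2 * (exp \<delta> * S0) \<le> (real M ^ 2 + 1) * ((S0 + 1) * exp \<delta>)"
      proof (rule mult_mono)
        show "exp \<delta> * S0 \<le> (S0 + 1) * exp \<delta>" by (simp add: algebra_simps)
      qed (use S0pos in auto)
      moreover have "K = 2 * ((real M ^ 2 + 1) * ((S0 + 1) * exp \<delta>))" by (simp add: K_def mult.assoc)
      ultimately show "2 * (real M ^ 2 * (exp \<delta> * S0)) \<le> K" by linarith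
    qed
    have twoQ: "2 * Q \<le> x"
    proof -
      have "2 * Q = 2 * (exp \<delta> * S0) * x * x" by (simp add: Qx)
      also have "\<dots> \<le> K * x * x" using K1 x0 by (intro mult_right_mono) auto
      also have "\<dots> \<le> 1 * x" using Kx x0 by (intro mult_right_mono) auto
      finally show ?thesis by simp
    qed
    have MQ: "real M ^ 2 * Q \<le> 1/2"
    proof -
      have "2 * (real M ^ 2 * Q) = 2 * (real M ^ 2 * (exp \<delta> * S0)) * x * x" by (simp add: Qx)
      also have "\<dots> \<le> K * x * x" using K2 x0 by (intro mult_right_mono) auto
      also have "\<dots> \<le> 1 * x" using Kx x0 by (intro mult_right_mono) auto
      finally show ?thesis using x1 by simp
    qed
    have gQ: "(\<Sum>\<gamma>\<in>T. exp (- b * norm \<gamma>)) \<le> Q" if "finite T" "T \<subseteq> \<Gamma> - {0}" for T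
      unfolding Q_def by (rule sumb[OF bge that])
    have fin1: "(\<Sum>J\<in>JJ. exp (- \<beta> * c6 * size \<Lambda> E J)) \<le> x"
      if fE: "finite E" and EL: "E \<subseteq> \<Lambda>" and fJ: "finite JJ" and sub: "JJ \<subseteq> {J \<in> Jset \<Gamma> E. oe \<in> supp E J}"
      for E JJ oe
    proof -
      have "(\<Sum>J\<in>JJ. exp (- \<beta> * c6 * size \<Lambda> E J)) = (\<Sum>J\<in>JJ. exp (- b * size \<Lambda> E J))"
        by (simp add: b_def)
      also have "\<dots> \<le> 2 * Q"
        by (rule core[OF gQ nb M1 MQ _ fE EL fJ sub]) (use bge in auto)
      finally show ?thesis using twoQ by simp
    qed
    have P1: "(\<lambda>J. exp (- \<beta> * c6 * size \<Lambda> E J)) summable_on {J \<in> Jset \<Gamma> E. oe \<in> supp E J} \<and>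
        (\<Sum>\<^sub>\<infinity>J\<in>{J \<in> Jset \<Gamma> E. oe \<in> supp E J}. exp (- \<beta> * c6 * size \<Lambda> E J)) \<le> exp (- \<beta> * c7)"
      if fE: "finite E" and EL: "E \<subseteq> \<Lambda>" for E oe
    proof -
      have sm: "(\<lambda>J. exp (- \<beta> * c6 * size \<Lambda> E J)) summable_on {J \<in> Jset \<Gamma> E. oe \<in> supp E J}"
      proof (rule nonneg_bdd_above_summable_on)
        show "bdd_above (sum (\<lambda>J. exp (- \<beta> * c6 * size \<Lambda> E J)) ` {F. F \<subseteq> {J \<in> Jset \<Gamma> E. oe \<in> supp E J} \<and> finite F})"
        proof (rule bdd_aboveI[of _ x])
          fix y assume "y \<in> sum (\<lambda>J. exp (- \<beta> * c6 * size \<Lambda> E J)) ` {F. F \<subseteq> {J \<in> Jset \<Gamma> E. oe \<in> supp E J} \<and> finite F}"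
          then obtain F where F: "F \<subseteq> {J \<in> Jset \<Gamma> E. oe \<in> supp E J}" "finite F"
            and y: "y = (\<Sum>J\<in>F. exp (- \<beta> * c6 * size \<Lambda> E J))" by blast
          show "y \<le> x" unfolding y by (rule fin1[OF fE EL F(2) F(1)])
        qed
      qed simp
      moreover have "(\<Sum>\<^sub>\<infinity>J\<in>{J \<in> Jset \<Gamma> E. oe \<in> supp E J}. exp (- \<beta> * c6 * size \<Lambda> E J)) \<le> x"
        by (rule infsum_le_finite_sums[OF sm]) (rule fin1[OF fE EL])
      ultimately show ?thesis by (simp add: x_def)
    qed
    have P2: "(\<Sum>J\<in>{J\<in>Jt. oe \<in> supp E J}.
            exp (- \<beta> * c4 * size \<Lambda> E J) * exp (\<beta> * c5 * eta \<Gamma> * real (card (supp E J)))) \<le> x"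
      if fE: "finite E" and EL: "E \<subseteq> \<Lambda>" and fJ: "finite Jt" and sub: "Jt \<subseteq> Jset \<Gamma> E" for E Jt oe
    proof -
      have "(\<Sum>J\<in>{J\<in>Jt. oe \<in> supp E J}.
            exp (- \<beta> * c4 * size \<Lambda> E J) * exp (\<beta> * c5 * eta \<Gamma> * real (card (supp E J))))
          \<le> (\<Sum>J\<in>{J\<in>Jt. oe \<in> supp E J}. exp (- \<beta> * c6 * size \<Lambda> E J))"
      proof (rule sum_mono)
        fix J assume "J \<in> {J\<in>Jt. oe \<in> supp E J}"
        then have JJ: "J \<in> Jset \<Gamma> E" using sub by auto
        have "\<beta> * c5 * (eta \<Gamma> * real (card (supp E J))) \<le> \<beta> * c5 * size \<Lambda> E J"
          using size_ge[OF fE JJ] bpos c5 by (intro mult_left_mono) auto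
        then have "- \<beta> * c4 * size \<Lambda> E J + \<beta> * c5 * eta \<Gamma> * real (card (supp E J)) \<le> - \<beta> * c6 * size \<Lambda> E J"
          by (simp add: c6_def algebra_simps)
        then show "exp (- \<beta> * c4 * size \<Lambda> E J) * exp (\<beta> * c5 * eta \<Gamma> * real (card (supp E J)))
            \<le> exp (- \<beta> * c6 * size \<Lambda> E J)"
          by (simp add: exp_add[symmetric])
      qed
      also have "\<dots> \<le> x" by (rule fin1[OF fE EL]) (use fJ sub in auto)
      finally show ?thesis .
    qed
    have P3: "(\<Sum>J\<in>Jt. exp (- \<beta> * c4 * size \<Lambda> E J) * (if incompat E I J then 1 else 0)
                    * exp (\<beta> * c5 * eta \<Gamma> * real (card (supp E J))))
          \<le> \<beta> * c5 * eta \<Gamma> * real (card (supp E I))"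
      if fE: "finite E" and EL: "E \<subseteq> \<Lambda>" and fJ: "finite Jt" and sub: "Jt \<subseteq> Jset \<Gamma> E" and IJ: "I \<in> Jt"
      for E Jt I
    proof -
      define w where "w J = exp (- \<beta> * c4 * size \<Lambda> E J) * exp (\<beta> * c5 * eta \<Gamma> * real (card (supp E J)))" for J
      have w0: "w J \<ge> 0" for J by (simp add: w_def)
      define X where "X = {e'\<in>E. \<exists>e\<in>supp E I. share_vertex e e'}"
      have fX: "finite X" using fE by (simp add: X_def)
      have "(\<Sum>J\<in>Jt. exp (- \<beta> * c4 * size \<Lambda> E J) * (if incompat E I J then 1 else 0)
                    * exp (\<beta> * c5 * eta \<Gamma> * real (card (supp E J))))
           = (\<Sum>J\<in>Jt. if incompat E I J then w J else 0)"
        by (rule sum.cong) (auto simp: w_def)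
      also have "\<dots> \<le> (\<Sum>J\<in>Jt. \<Sum>e'\<in>X. if e' \<in> supp E J then w J else 0)"
      proof (rule sum_mono)
        fix J assume "J \<in> Jt"
        show "(if incompat E I J then w J else 0) \<le> (\<Sum>e'\<in>X. if e' \<in> supp E J then w J else 0)"
        proof (cases "incompat E I J")
          case True
          then obtain e e' where e: "e \<in> supp E I" and e': "e' \<in> supp E J" and sv: "share_vertex e e'"
            unfolding incompat_def by blast
          have e'E: "e' \<in> E" using e' by (simp add: supp_def)
          have e'X: "e' \<in> X" unfolding X_def using e e'E sv by blast
          have "w J = (if e' \<in> supp E J then w J else 0)" using e' by simp
          also have "\<dots> \<le> (\<Sum>e'\<in>X. if e' \<in> supp E J then w J else 0)"
            by (rule member_le_sum[OF e'X _ fX]) (simp add: w0)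
          finally show ?thesis using True by simp
        next
          case False
          then show ?thesis by (simp add: w0 sum_nonneg)
        qed
      qed
      also have "\<dots> = (\<Sum>e'\<in>X. \<Sum>J\<in>Jt. if e' \<in> supp E J then w J else 0)"
        by (rule sum.swap)
      also have "\<dots> = (\<Sum>e'\<in>X. \<Sum>J\<in>{J\<in>Jt. e' \<in> supp E J}. w J)"
        by (rule sum.cong) (auto simp: sum.inter_filter fJ)
      also have "\<dots> \<le> (\<Sum>e'\<in>X. x)"
        by (rule sum_mono) (unfold w_def, rule P2[OF fE EL fJ sub])
      also have "\<dots> = real (card X) * x" by simp
      also have "\<dots> \<le> real (card X)" using x1 by (simp add: mult_left_le)
      also have "\<dots> \<le> real M * real (card (supp E I))"
      proof -
        have "X \<subseteq> (\<Union>e\<in>supp E I. Nb \<Lambda> e)" using EL by (auto simp: X_def Nb_def)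
        then have "card X \<le> card (\<Union>e\<in>supp E I. Nb \<Lambda> e)"
          using nb supp_fin[OF fE] by (intro card_mono) auto
        also have "\<dots> \<le> (\<Sum>e\<in>supp E I. card (Nb \<Lambda> e))" by (rule card_UN_le) (rule supp_fin[OF fE])
        also have "\<dots> \<le> (\<Sum>e\<in>supp E I. M)" by (rule sum_mono) (use nb in auto)
        also have "\<dots> = M * card (supp E I)" by simp
        finally have "card X \<le> M * card (supp E I)" .
        then show ?thesis by (simp flip: of_nat_mult)
      qed
      also have "\<dots> \<le> \<beta> * c5 * eta \<Gamma> * real (card (supp E I))"
      proof (rule mult_right_mono)
        have "real M < \<beta> * (c5 * \<delta>)" using b3 c5 dpos by (simp add: field_simps)
        also have "\<dots> \<le> \<beta> * (c5 * eta \<Gamma>)" using eta_ge bpos c5 by (intro mult_left_mono) auto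
        finally show "real M \<le> \<beta> * c5 * eta \<Gamma>" by (simp add: mult.assoc)
      qed simp
      finally show ?thesis .
    qed
    show ?thesis using P1 P2 P3 by (auto simp: x_def)
  qed
  show ?thesis using c7pos main by blast
qed

end
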